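(* Assume each $f_j:\mathbb R^n\to\mathbb R$ ($1\le j\le m$) is continuously differentiable with $L_j$-Lipschitz gradient and $\mu_j$-strongly convex ($0\le\mu_j\le L_j<\infty$), and let $\mu=\min_j\mu_j$. Let $\gamma_0>0$, $x_0,x_1\in\mathbb R^n$, and $\gamma(t)=\mu+(\gamma_0-\mu)e^{-t}$. Let $X,Z:[0,\infty)\to\mathbb R^n$ be locally absolutely continuous with $X(0)=x_0$, $Z(0)=x_0+x_1$, satisfying for almost every $t>0$ $$X'(t)=Z(t)-X(t),\qquad \gamma(t)Z'(t)\in\mu\big(X(t)-Z(t)\big)-\operatorname*{argmin}_{v\in C(X(t))}\langle X(t)-Z(t),v\rangle.$$ For $z\in\mathbb R^n$ define $\mathcal E(t;z):=f(X(t);z)+\frac{\gamma(t)}{2}\|Z(t)-z\|^2$. Then for every $z\in\mathbb R^n$ and almost every $t>0$, $$\frac{d}{dt}\mathcal E(t;z)\le-\mathcal E(t;z)-\frac{\mu}{2}\|Z(t)-X(t)\|^2,$$ and consequently for all $t>0$, $$f(X(t);z)+\frac{\gamma(t)}{2}\|Z(t)-z\|^2\le e^{-t}\Big(f(x_0;z)+\frac{\gamma_0}{2}\|x_0+x_1-z\|^2\Big).$$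
   Context: A function $g$ is $\mu_j$-strongly convex if $g(z)\ge g(y)+\langle\nabla g(y),z-y\rangle+\frac{\mu_j}{2}\|z-y\|^2$ for all $y,z$ ($\mu_j=0$: convex). $C(x)=\mathrm{conv}\{\nabla f_1(x),\dots,\nabla f_m(x)\}$. $f(x;z):=\min_{1\le j\le m}[f_j(x)-f_j(z)]$. The parameter $\gamma$ solves $\gamma'=\mu-\gamma$, $\gamma(0)=\gamma_0$. *)

theory Defs
  imports "HOL-Analysis.Analysis"
begin

definition strongly_convex_grad :: "('a::real_inner \<Rightarrow> real) \<Rightarrow> ('a \<Rightarrow> 'a) \<Rightarrow> real \<Rightarrow> bool" where
  "strongly_convex_grad f g mu \<longleftrightarrow>
     (\<forall>y z. f z \<ge> f y + inner (g y) (z - y) + mu / 2 * (norm (z - y))^2)"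

definition abs_cont_on :: "real \<Rightarrow> real \<Rightarrow> (real \<Rightarrow> 'a::real_normed_vector) \<Rightarrow> bool" where
  "abs_cont_on a b X \<longleftrightarrow>
     (\<forall>e>0. \<exists>d>0. \<forall>(n::nat) (l::nat \<Rightarrow> real) (r::nat \<Rightarrow> real).
        (\<forall>k<n. a \<le> l k \<and> l k \<le> r k \<and> r k \<le> b) \<and>
        (\<forall>k<n. \<forall>k'<n. k \<noteq> k' \<longrightarrow> r k \<le> l k' \<or> r k' \<le> l k) \<and>
        (\<Sum>k<n. r k - l k) < d
        \<longrightarrow> (\<Sum>k<n. norm (X (r k) - X (l k))) < e)"

definition loc_abs_cont :: "(real \<Rightarrow> 'a::real_normed_vector) \<Rightarrow> bool" where
  "loc_abs_cont X \<longleftrightarrow> (\<forall>T\<ge>0. abs_cont_on 0 T X)"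

definition Cset :: "(nat \<Rightarrow> 'a \<Rightarrow> 'a::real_vector) \<Rightarrow> nat \<Rightarrow> 'a \<Rightarrow> 'a set" where
  "Cset g m x = convex hull ((\<lambda>j. g j x) ` {1..m})"

definition argmin_set :: "('a \<Rightarrow> real) \<Rightarrow> 'a set \<Rightarrow> 'a set" where
  "argmin_set h S = {v \<in> S. \<forall>w\<in>S. h v \<le> h w}"

definition fmin :: "(nat \<Rightarrow> 'a \<Rightarrow> real) \<Rightarrow> nat \<Rightarrow> 'a \<Rightarrow> 'a \<Rightarrow> real" where
  "fmin f m x z = Min ((\<lambda>j. f j x - f j z) ` {1..m})"

end

theory Submission
  imports Defs
begin

definition ACP :: "real \<Rightarrow> real \<Rightarrow> (real \<Rightarrow> 'a::real_normed_vector) \<Rightarrow> real \<Rightarrow> real \<Rightarrow> bool" where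
  "ACP a b u d e \<longleftrightarrow> (\<forall>(n::nat) (l::nat \<Rightarrow> real) (r::nat \<Rightarrow> real). (\<forall>k<n. a \<le> l k \<and> l k \<le> r k \<and> r k \<le> b) \<and>
        (\<forall>k<n. \<forall>k'<n. k \<noteq> k' \<longrightarrow> r k \<le> l k' \<or> r k' \<le> l k) \<and>
        (\<Sum>k<n. r k - l k) < d \<longrightarrow> (\<Sum>k<n. norm (u (r k) - u (l k))) < e)"

lemma acD:
  assumes "abs_cont_on a b u" "(e::real) > 0"
  shows "\<exists>d>0. ACP a b u d e"
  using assms unfolding abs_cont_on_def ACP_def by blast

lemma ac_dom:
  fixes u :: "real \<Rightarrow> 'a::real_normed_vector" and w :: "real \<Rightarrow> 'b::real_normed_vector"
  assumes ac: "abs_cont_on a b u" and C: "C \<ge> 0"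
    and dom: "\<And>l r. a \<le> l \<Longrightarrow> l \<le> r \<Longrightarrow> r \<le> b \<Longrightarrow> norm (w r - w l) \<le> C * norm (u r - u l)"
  shows "abs_cont_on a b w"
  unfolding abs_cont_on_def
proof (intro allI impI)
  fix e :: real assume e: "e > 0"
  have ep: "e / (C+1) > 0" using C e by simp
  obtain d where d: "d > 0" and H: "ACP a b u d (e / (C+1))"
    using acD[OF ac ep] by blast
  show "\<exists>d>0. \<forall>(n::nat) (l::nat \<Rightarrow> real) (r::nat \<Rightarrow> real).
        (\<forall>k<n. a \<le> l k \<and> l k \<le> r k \<and> r k \<le> b) \<and>
        (\<forall>k<n. \<forall>k'<n. k \<noteq> k' \<longrightarrow> r k \<le> l k' \<or> r k' \<le> l k) \<and>
        (\<Sum>k<n. r k - l k) < d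
        \<longrightarrow> (\<Sum>k<n. norm (w (r k) - w (l k))) < e"
  proof (intro exI[of _ d] conjI allI impI d)
    fix n :: nat and l r :: "nat \<Rightarrow> real" assume A: "(\<forall>k<n. a \<le> l k \<and> l k \<le> r k \<and> r k \<le> b) \<and>
        (\<forall>k<n. \<forall>k'<n. k \<noteq> k' \<longrightarrow> r k \<le> l k' \<or> r k' \<le> l k) \<and>
        (\<Sum>k<n. r k - l k) < d"
    have "(\<Sum>k<n. norm (w (r k) - w (l k))) \<le> (\<Sum>k<n. C * norm (u (r k) - u (l k)))"
      using A dom by (intro sum_mono) auto
    also have "\<dots> = C * (\<Sum>k<n. norm (u (r k) - u (l k)))" by (simp add: sum_distrib_left)
    also have "\<dots> \<le> C * (e / (C+1))" using H[unfolded ACP_def, rule_format, of n l r] A C by (intro mult_left_mono) auto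
    also have "\<dots> < e" using C e by (simp add: field_simps)
    finally show "(\<Sum>k<n. norm (w (r k) - w (l k))) < e" .
  qed
qed

lemma ac_pair:
  fixes u :: "real \<Rightarrow> 'a::real_normed_vector" and v :: "real \<Rightarrow> 'b::real_normed_vector"
  assumes "abs_cont_on a b u" "abs_cont_on a b v"
  shows "abs_cont_on a b (\<lambda>t. (u t, v t))"
  unfolding abs_cont_on_def
proof (intro allI impI)
  fix e :: real assume e: "e > 0"
  then have e2: "e/2 > 0" by simp
  obtain d1 where d1: "d1 > 0" and H1: "ACP a b u d1 (e/2)"
    using acD[OF assms(1) e2] by blast
  obtain d2 where d2: "d2 > 0" and H2: "ACP a b v d2 (e/2)"
    using acD[OF assms(2) e2] by blast
  show "\<exists>d>0. \<forall>(n::nat) (l::nat \<Rightarrow> real) (r::nat \<Rightarrow> real).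
        (\<forall>k<n. a \<le> l k \<and> l k \<le> r k \<and> r k \<le> b) \<and>
        (\<forall>k<n. \<forall>k'<n. k \<noteq> k' \<longrightarrow> r k \<le> l k' \<or> r k' \<le> l k) \<and>
        (\<Sum>k<n. r k - l k) < d
        \<longrightarrow> (\<Sum>k<n. norm ((u (r k), v (r k)) - (u (l k), v (l k)))) < e"
  proof (intro exI[of _ "min d1 d2"] conjI allI impI)
    show "min d1 d2 > 0" using d1 d2 by simp
    fix n :: nat and l r :: "nat \<Rightarrow> real" assume A: "(\<forall>k<n. a \<le> l k \<and> l k \<le> r k \<and> r k \<le> b) \<and>
        (\<forall>k<n. \<forall>k'<n. k \<noteq> k' \<longrightarrow> r k \<le> l k' \<or> r k' \<le> l k) \<and>
        (\<Sum>k<n. r k - l k) < min d1 d2"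
    have A1: "(\<Sum>k<n. norm (u (r k) - u (l k))) < e/2"
      using A by (intro H1[unfolded ACP_def, rule_format, of n l r]) auto
    have A2: "(\<Sum>k<n. norm (v (r k) - v (l k))) < e/2"
      using A by (intro H2[unfolded ACP_def, rule_format, of n l r]) auto
    have "(\<Sum>k<n. norm ((u (r k), v (r k)) - (u (l k), v (l k)))) \<le>
          (\<Sum>k<n. norm (u (r k) - u (l k)) + norm (v (r k) - v (l k)))"
      by (intro sum_mono) (simp add: norm_Pair_le)
    also have "\<dots> < e/2 + e/2" unfolding sum.distrib using A1 A2 by linarith
    finally show "(\<Sum>k<n. norm ((u (r k), v (r k)) - (u (l k), v (l k)))) < e" by simp
  qed
qed

lemma ac_id: "abs_cont_on a b (\<lambda>t::real. t)"
  unfolding abs_cont_on_def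
proof (intro allI impI)
  fix e :: real assume e: "e > 0"
  show "\<exists>d>0. \<forall>(n::nat) (l::nat \<Rightarrow> real) (r::nat \<Rightarrow> real).
        (\<forall>k<n. a \<le> l k \<and> l k \<le> r k \<and> r k \<le> b) \<and>
        (\<forall>k<n. \<forall>k'<n. k \<noteq> k' \<longrightarrow> r k \<le> l k' \<or> r k' \<le> l k) \<and>
        (\<Sum>k<n. r k - l k) < d
        \<longrightarrow> (\<Sum>k<n. norm (r k - l k)) < e"
  proof (intro exI[of _ e] conjI allI impI e)
    fix n :: nat and l r :: "nat \<Rightarrow> real" assume A: "(\<forall>k<n. a \<le> l k \<and> l k \<le> r k \<and> r k \<le> b) \<and>
        (\<forall>k<n. \<forall>k'<n. k \<noteq> k' \<longrightarrow> r k \<le> l k' \<or> r k' \<le> l k) \<and>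
        (\<Sum>k<n. r k - l k) < e"
    have "(\<Sum>k<n. norm (r k - l k)) = (\<Sum>k<n. r k - l k)"
      using A by (intro sum.cong) auto
    then show "(\<Sum>k<n. norm (r k - l k)) < e" using A by simp
  qed
qed

lemma ac_cont:
  fixes u :: "real \<Rightarrow> 'a::real_normed_vector"
  assumes ac: "abs_cont_on a b u"
  shows "continuous_on {a..b} u"
  unfolding continuous_on_iff
proof (intro ballI allI impI)
  fix x e assume x: "x \<in> {a..b}" and e: "(e::real) > 0"
  obtain d where d: "d > 0" and H: "ACP a b u d (e)"
    using acD[OF ac e] by blast
  show "\<exists>d>0. \<forall>x'\<in>{a..b}. dist x' x < d \<longrightarrow> dist (u x') (u x) < e"
  proof (intro exI[of _ d] conjI ballI impI d)
    fix y assume y: "y \<in> {a..b}" and dy: "dist y x < d"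
    have "(\<Sum>k<(1::nat). norm (u ((\<lambda>_. max x y) k) - u ((\<lambda>_. min x y) k))) < e"
      using x y dy by (intro H[unfolded ACP_def, rule_format]) (auto simp: dist_real_def)
    then have "norm (u (max x y) - u (min x y)) < e" by simp
    then show "dist (u y) (u x) < e"
    proof (cases "x \<le> y")
      case True
      then show ?thesis using \<open>norm (u (max x y) - u (min x y)) < e\<close> by (simp add: dist_norm)
    next
      case False
      then have "norm (u (max x y) - u (min x y)) = norm (u x - u y)" by simp
      then show ?thesis using \<open>norm (u (max x y) - u (min x y)) < e\<close>
        by (simp add: dist_norm norm_minus_commute)
    qed
  qed
qed

lemma ac_bounded:
  fixes u :: "real \<Rightarrow> 'a::real_normed_vector"
  assumes ac: "abs_cont_on a b u"
  obtains M where "M \<ge> 0" "\<And>t. t \<in> {a..b} \<Longrightarrow> norm (u t) \<le> M"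
proof -
  have "compact (u ` {a..b})" using ac_cont[OF ac] by (intro compact_continuous_image) auto
  then have "bounded (u ` {a..b})" by (rule compact_imp_bounded)
  then obtain M where M: "\<forall>y\<in>u ` {a..b}. norm y \<le> M" unfolding bounded_iff by blast
  show ?thesis
  proof (rule that[of "max M 0"])
    fix t assume "t \<in> {a..b}"
    then have "norm (u t) \<le> M" using M by blast
    then show "norm (u t) \<le> max M 0" by simp
  qed simp
qed

lemma ac_add:
  fixes u v :: "real \<Rightarrow> real"
  assumes "abs_cont_on a b u" "abs_cont_on a b v"
  shows "abs_cont_on a b (\<lambda>t. u t + v t)"
proof (rule ac_dom[OF ac_pair[OF assms], of 2])
  fix l r :: real
  have "norm (u r + v r - (u l + v l)) \<le> norm (u r - u l) + norm (v r - v l)"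
    by (simp add: abs_triangle_ineq[THEN order_trans] )
  also have "\<dots> \<le> 2 * norm ((u r, v r) - (u l, v l))"
    using norm_fst_le[of "u r - u l" "v r - v l"] norm_snd_le[of "v r - v l" "u r - u l"] by simp
  finally show "norm (u r + v r - (u l + v l)) \<le> 2 * norm ((u r, v r) - (u l, v l))" .
qed simp

lemma ac_mult:
  fixes u v :: "real \<Rightarrow> real"
  assumes "abs_cont_on a b u" "abs_cont_on a b v"
  shows "abs_cont_on a b (\<lambda>t. u t * v t)"
proof -
  obtain M1 where M1: "M1 \<ge> 0" "\<And>t. t \<in> {a..b} \<Longrightarrow> norm (u t) \<le> M1" using ac_bounded[OF assms(1)] by blast
  obtain M2 where M2: "M2 \<ge> 0" "\<And>t. t \<in> {a..b} \<Longrightarrow> norm (v t) \<le> M2" using ac_bounded[OF assms(2)] by blast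
  show ?thesis
  proof (rule ac_dom[OF ac_pair[OF assms], of "M1 + M2"])
    fix l r :: real assume lr: "a \<le> l" "l \<le> r" "r \<le> b"
    have eq: "u r * v r - u l * v l = u r * (v r - v l) + v l * (u r - u l)" by (simp add: algebra_simps)
    have "norm (u r * v r - u l * v l) \<le> norm (u r) * norm (v r - v l) + norm (v l) * norm (u r - u l)"
      unfolding eq by (metis abs_mult abs_triangle_ineq real_norm_def)
    also have "\<dots> \<le> M1 * norm ((u r, v r) - (u l, v l)) + M2 * norm ((u r, v r) - (u l, v l))"
    proof (rule add_mono)
      have "norm (v r - v l) \<le> norm ((u r, v r) - (u l, v l))"
        using norm_snd_le[of "v r - v l" "u r - u l"] by simp
      moreover have "norm (u r) \<le> M1" using M1 lr by auto
      ultimately show "norm (u r) * norm (v r - v l) \<le> M1 * norm ((u r, v r) - (u l, v l))"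
        by (intro mult_mono) auto
      have "norm (u r - u l) \<le> norm ((u r, v r) - (u l, v l))"
        using norm_fst_le[of "u r - u l" "v r - v l"] by simp
      moreover have "norm (v l) \<le> M2" using M2 lr by auto
      ultimately show "norm (v l) * norm (u r - u l) \<le> M2 * norm ((u r, v r) - (u l, v l))"
        by (intro mult_mono) auto
    qed
    finally show "norm (u r * v r - u l * v l) \<le> (M1 + M2) * norm ((u r, v r) - (u l, v l))"
      by (simp add: algebra_simps)
  qed (use M1 M2 in simp)
qed

lemma straddle_neg:
  fixes \<phi> :: "real \<Rightarrow> real"
  assumes D: "D \<le> 0" and der: "(\<phi> has_real_derivative D) (at t)" and e: "e > 0"
  shows "\<exists>\<delta>>0. \<forall>u v. u \<le> t \<longrightarrow> t \<le> v \<longrightarrow> t - u < \<delta> \<longrightarrow> v - t < \<delta> \<longrightarrow> \<phi> v - \<phi> u \<le> e * (v - u)"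
proof -
  have "(\<phi> has_derivative (\<lambda>h. D * h)) (at t within UNIV)"
    using der by (simp add: has_field_derivative_def)
  then obtain \<delta> where \<delta>: "\<delta> > 0" and H: "\<forall>y\<in>UNIV. norm (y - t) < \<delta> \<longrightarrow>
      norm (\<phi> y - \<phi> t - D * (y - t)) \<le> e * norm (y - t)"
    using e unfolding has_derivative_within_alt by blast
  show ?thesis
  proof (intro exI[of _ \<delta>] conjI allI impI \<delta>)
    fix u v assume uv: "u \<le> t" "t \<le> v" "t - u < \<delta>" "v - t < \<delta>"
    have "\<bar>v - t\<bar> < \<delta>" "\<bar>u - t\<bar> < \<delta>" using uv by auto
    then have 1: "\<bar>\<phi> v - \<phi> t - D * (v - t)\<bar> \<le> e * \<bar>v - t\<bar>"
      and 2: "\<bar>\<phi> u - \<phi> t - D * (u - t)\<bar> \<le> e * \<bar>u - t\<bar>" using H by auto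
    have 3: "(v - u) * D \<le> 0" using uv D by (simp add: mult_nonneg_nonpos)
    have av: "\<bar>v - t\<bar> = v - t" and au: "\<bar>u - t\<bar> = t - u" using uv by auto
    have 4: "\<phi> v - \<phi> t - D * (v - t) \<le> e * (v - t)" using abs_le_D1[OF 1] av by simp
    have 5: "- (\<phi> u - \<phi> t - D * (u - t)) \<le> e * (t - u)" using abs_le_D2[OF 2] au by simp
    have 6: "D * (v - t) - D * (u - t) = (v - u) * D" by (simp add: algebra_simps)
    have 7: "e * (v - t) + e * (t - u) = e * (v - u)" by (simp add: algebra_simps)
    show "\<phi> v - \<phi> u \<le> e * (v - u)" using 3 4 5 6 7 by linarith
  qed
qed

lemma ac_mono_neg:
  fixes \<phi> :: "real \<Rightarrow> real"
  assumes ab: "a \<le> b" and ac: "abs_cont_on a b \<phi>" and N: "negligible N"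
    and der: "\<And>t. t \<in> {a..b} \<Longrightarrow> t \<notin> N \<Longrightarrow> \<exists>D. D \<le> 0 \<and> (\<phi> has_real_derivative D) (at t)"
  shows "\<phi> b \<le> \<phi> a"
proof (rule field_le_epsilon)
  fix e :: real assume e: "e > 0"
  define \<epsilon> where "\<epsilon> = e / (2 * (b - a + 1))"
  have \<epsilon>: "\<epsilon> > 0" using e ab by (simp add: \<epsilon>_def)
  have \<epsilon>ba: "\<epsilon> * (b - a) \<le> e / 2"
  proof -
    have "\<epsilon> * (b - a) \<le> \<epsilon> * (b - a + 1)" using \<epsilon> by simp
    also have "\<dots> = e / 2" using ab by (simp add: \<epsilon>_def divide_simps)
    finally show ?thesis .
  qed
  have e2: "e/2 > 0" using e by simp
  obtain d where d: "d > 0" and H: "ACP a b \<phi> d (e/2)" using acD[OF ac e2] by blast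
  have "(indicat_real N has_integral 0) (cbox a b)" using N unfolding negligible_def by blast
  from this[unfolded has_integral, rule_format, OF d] obtain \<gamma>1 where g1: "gauge \<gamma>1" and G1: "\<forall>\<D>. \<D> tagged_division_of (cbox a b) \<and> \<gamma>1 fine \<D> \<longrightarrow>
        norm ((\<Sum>(x, k)\<in>\<D>. measure lborel k *\<^sub>R indicat_real N x) - 0) < d"
    by blast
  define Q where "Q t d \<longleftrightarrow> d > 0 \<and> (\<forall>u v. u \<le> t \<longrightarrow> t \<le> v \<longrightarrow> t - u < d \<longrightarrow> v - t < d \<longrightarrow> \<phi> v - \<phi> u \<le> \<epsilon> * (v - u))" for t d
  have str: "\<exists>d. Q t d" if t: "t \<in> {a..b}" "t \<notin> N" for t
  proof -
    obtain D where D: "D \<le> 0" "(\<phi> has_real_derivative D) (at t)" using der[OF t] by blast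
    show ?thesis unfolding Q_def using straddle_neg[OF D \<epsilon>] by simp
  qed
  define \<delta> where "\<delta> t = (if t \<in> {a..b} \<and> t \<notin> N then (SOME d. Q t d) else 1)" for t
  have Qd: "Q t (\<delta> t)" if "t \<in> {a..b}" "t \<notin> N" for t
  proof -
    have "\<delta> t = (SOME d. Q t d)" using that by (simp add: \<delta>_def)
    then show ?thesis using someI_ex[OF str[OF that]] by simp
  qed
  have \<delta>pos: "\<delta> t > 0" for t
  proof (cases "t \<in> {a..b} \<and> t \<notin> N")
    case True
    then show ?thesis using Qd[of t] unfolding Q_def by blast
  next
    case False
    have "\<delta> t = 1" unfolding \<delta>_def by (rule if_not_P[OF False])
    then show ?thesis by simp
  qed
  have \<delta>str: "\<phi> v - \<phi> u \<le> \<epsilon> * (v - u)"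
    if "t \<in> {a..b}" "t \<notin> N" "u \<le> t" "t \<le> v" "t - u < \<delta> t" "v - t < \<delta> t" for t u v
    using Qd[OF that(1,2)] that(3-6) unfolding Q_def by blast
  have g2: "gauge (\<lambda>t. ball t (\<delta> t))" using \<delta>pos by (auto simp: gauge_def)
  obtain p where p: "p tagged_division_of {a..b}" and fine: "(\<lambda>t. \<gamma>1 t \<inter> ball t (\<delta> t)) fine p"
    using fine_division_exists_real[OF gauge_Int[OF g1 g2]] by blast
  have fine1: "\<gamma>1 fine p" and fine2: "(\<lambda>t. ball t (\<delta> t)) fine p" using fine by (auto simp: fine_Int)
  have pf: "finite p" using p by blast
  have pe: "\<exists>u v. K = {u..v} \<and> u \<le> v \<and> a \<le> u \<and> v \<le> b \<and> u \<le> x \<and> x \<le> v \<and> K \<subseteq> ball x (\<delta> x)"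
    if xKp0: "(x, K) \<in> p" for x K
  proof -
    obtain u v where K: "K = cbox u v" using tagged_division_ofD(4)[OF p xKp0] by blast
    have xK: "x \<in> K" using tagged_division_ofD(2)[OF p xKp0] .
    have Kab: "K \<subseteq> {a..b}" using tagged_division_ofD(3)[OF p xKp0] .
    have "K \<subseteq> ball x (\<delta> x)" using fine2 xKp0 by blast
    moreover have "K = {u..v}" using K by simp
    moreover have "u \<le> v" "u \<le> x" "x \<le> v" using xK K by auto
    moreover have "a \<le> u" "v \<le> b" using Kab K \<open>u \<le> v\<close> by auto
    ultimately show ?thesis by blast
  qed
  define \<Delta> where "\<Delta> = (\<lambda>(x::real, K::real set). \<phi> (Sup K) - \<phi> (Inf K))"
  have tele: "\<phi> b - \<phi> a = (\<Sum>xK\<in>p. \<Delta> xK)"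
    using additive_tagged_division_1[OF ab p, of \<phi>] by (simp add: \<Delta>_def case_prod_unfold)
  define pN where "pN = {xK \<in> p. fst xK \<in> N}"
  define pS where "pS = {xK \<in> p. fst xK \<notin> N}"
  have split: "(\<Sum>xK\<in>p. \<Delta> xK) = (\<Sum>xK\<in>pS. \<Delta> xK) + (\<Sum>xK\<in>pN. \<Delta> xK)"
  proof -
    have "p = pS \<union> pN" "pS \<inter> pN = {}" by (auto simp: pS_def pN_def)
    then show ?thesis using pf by (simp add: sum.union_disjoint)
  qed
  have contp: "(\<Sum>(x,K)\<in>p. measure lborel K) = b - a"
    using additive_content_tagged_division[of p a b] p ab by simp
  have cont_nn: "measure lborel K \<ge> 0" for K :: "real set" by simp
  have S: "(\<Sum>xK\<in>pS. \<Delta> xK) \<le> e / 2"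
  proof -
    have "(\<Sum>xK\<in>pS. \<Delta> xK) \<le> (\<Sum>xK\<in>pS. \<epsilon> * measure lborel (snd xK))"
    proof (rule sum_mono)
      fix xK assume xK: "xK \<in> pS"
      obtain x K where xKe: "xK = (x, K)" by (cases xK)
      have xKp: "(x, K) \<in> p" and xN: "x \<notin> N" using xK xKe by (auto simp: pS_def)
      obtain u v where uv: "K = {u..v}" "u \<le> v" "a \<le> u" "v \<le> b" "u \<le> x" "x \<le> v" "K \<subseteq> ball x (\<delta> x)"
        using pe[OF xKp] by blast
      have "u \<in> K" "v \<in> K" using uv(1,2) by auto
      then have "u \<in> ball x (\<delta> x)" "v \<in> ball x (\<delta> x)" using uv(7) by blast+
      then have xu: "x - u < \<delta> x" and vx: "v - x < \<delta> x" by (auto simp: dist_real_def)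
      have xab: "x \<in> {a..b}" using uv by auto
      have "\<phi> v - \<phi> u \<le> \<epsilon> * (v - u)" by (rule \<delta>str[OF xab xN uv(5) uv(6) xu vx])
      then show "\<Delta> xK \<le> \<epsilon> * measure lborel (snd xK)" using uv xKe by (simp add: \<Delta>_def)
    qed
    also have "\<dots> = \<epsilon> * (\<Sum>xK\<in>pS. measure lborel (snd xK))" by (simp add: sum_distrib_left)
    also have "(\<Sum>xK\<in>pS. measure lborel (snd xK)) \<le> (\<Sum>xK\<in>p. measure lborel (snd xK))"
      using pf by (intro sum_mono2) (auto simp: pS_def)
    also have "(\<Sum>xK\<in>p. measure lborel (snd xK)) = b - a" using contp by (simp add: case_prod_unfold)
    finally show ?thesis using \<epsilon> \<epsilon>ba by (simp add: mult_left_mono)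
  qed
  define pN' where "pN' = {xK \<in> pN. Inf (snd xK) < Sup (snd xK)}"
  have pNf: "finite pN'" using pf by (auto simp: pN'_def pN_def)
  have NN: "(\<Sum>xK\<in>pN. \<Delta> xK) \<le> (\<Sum>xK\<in>pN'. \<bar>\<Delta> xK\<bar>)"
  proof -
    have "(\<Sum>xK\<in>pN. \<Delta> xK) \<le> (\<Sum>xK\<in>pN. \<bar>\<Delta> xK\<bar>)" by (intro sum_mono) auto
    also have "\<dots> = (\<Sum>xK\<in>pN'. \<bar>\<Delta> xK\<bar>)"
    proof (rule sum.mono_neutral_right)
      show "finite pN" using pf by (auto simp: pN_def)
      show "pN' \<subseteq> pN" by (auto simp: pN'_def)
      show "\<forall>i\<in>pN - pN'. \<bar>\<Delta> i\<bar> = 0"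
      proof
        fix xK assume xK: "xK \<in> pN - pN'"
        obtain x K where xKe: "xK = (x, K)" by (cases xK)
        have xKp: "(x, K) \<in> p" using xK xKe by (auto simp: pN_def)
        obtain u v where uv: "K = {u..v}" "u \<le> v" using pe[OF xKp] by blast
        have "\<not> Inf K < Sup K" using xK xKe by (auto simp: pN'_def)
        then have "u = v" using uv by simp
        then show "\<bar>\<Delta> xK\<bar> = 0" using uv xKe by (simp add: \<Delta>_def)
      qed
    qed
    finally show ?thesis .
  qed
  obtain h where h: "bij_betw h {0..<card pN'} pN'" using ex_bij_betw_nat_finite[OF pNf] by blast
  define n where "n = card pN'"
  define l where "l k = Inf (snd (h k))" for k
  define r where "r k = Sup (snd (h k))" for k
  have hin: "h k \<in> pN'" if "k < n" for k using h that by (auto simp: n_def bij_betw_def)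
  have hp: "h k \<in> p" if "k < n" for k using hin[OF that] by (auto simp: pN'_def pN_def)
  have hlr: "\<exists>u v. snd (h k) = {u..v} \<and> u < v \<and> a \<le> u \<and> v \<le> b \<and> l k = u \<and> r k = v" if kn: "k < n" for k
  proof -
    obtain x K where e: "h k = (x, K)" by (cases "h k")
    have xKp: "(x, K) \<in> p" using hp[OF kn] e by simp
    obtain u v where uv: "K = {u..v}" "u \<le> v" "a \<le> u" "v \<le> b" using pe[OF xKp] by blast
    have "Inf K < Sup K" using hin[OF kn] e by (auto simp: pN'_def)
    then show ?thesis using uv e by (auto simp: l_def r_def)
  qed
  have C1: "\<forall>k<n. a \<le> l k \<and> l k \<le> r k \<and> r k \<le> b" using hlr by fastforce
  have C2: "\<forall>k<n. \<forall>k'<n. k \<noteq> k' \<longrightarrow> r k \<le> l k' \<or> r k' \<le> l k"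
  proof (intro allI impI)
    fix k k' assume kk: "k < n" "k' < n" "k \<noteq> k'"
    have neq: "h k \<noteq> h k'" using h kk by (auto simp: n_def bij_betw_def inj_on_def)
    obtain x K where e: "h k = (x, K)" by (cases "h k")
    obtain x' K' where e': "h k' = (x', K')" by (cases "h k'")
    have disj: "interior K \<inter> interior K' = {}"
      using tagged_division_ofD(5)[OF p, of x K x' K'] hp[OF kk(1)] hp[OF kk(2)] e e' neq by auto
    obtain u v where uv: "K = {u..v}" "u < v" "l k = u" "r k = v" using hlr[OF kk(1)] e by auto
    obtain u' v' where uv': "K' = {u'..v'}" "u' < v'" "l k' = u'" "r k' = v'" using hlr[OF kk(2)] e' by auto
    show "r k \<le> l k' \<or> r k' \<le> l k"
    proof (rule ccontr)
      assume "\<not> (r k \<le> l k' \<or> r k' \<le> l k)"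
      then have "max u u' < min v v'" using uv uv' by auto
      then have "(max u u' + min v v') / 2 \<in> interior K \<inter> interior K'" using uv uv' by auto
      then show False using disj by blast
    qed
  qed
  have sumlr: "(\<Sum>k<n. r k - l k) = (\<Sum>xK\<in>pN'. measure lborel (snd xK))"
  proof -
    have "(\<Sum>xK\<in>pN'. measure lborel (snd xK)) = (\<Sum>k\<in>{0..<n}. measure lborel (snd (h k)))"
      using sum.reindex_bij_betw[OF h, of "\<lambda>xK. measure lborel (snd xK)"] by (simp add: n_def)
    also have "\<dots> = (\<Sum>k<n. r k - l k)"
    proof (intro sum.cong)
      fix k assume "k \<in> {..<n}"
      then obtain u v where "snd (h k) = {u..v}" "u < v" "l k = u" "r k = v" using hlr[of k] by auto
      then show "measure lborel (snd (h k)) = r k - l k" by simp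
    qed (simp add: atLeast0LessThan)
    finally show ?thesis by simp
  qed
  have C3: "(\<Sum>k<n. r k - l k) < d"
  proof -
    have "(\<Sum>xK\<in>pN'. measure lborel (snd xK)) \<le> (\<Sum>xK\<in>pN. measure lborel (snd xK))"
      using pf by (intro sum_mono2) (auto simp: pN'_def pN_def)
    also have "\<dots> = (\<Sum>xK\<in>p. measure lborel (snd xK) * indicat_real N (fst xK))"
    proof (rule sum.mono_neutral_cong_left)
      show "finite p" by (rule pf)
    qed (auto simp: pN_def indicator_def)
    also have "\<dots> < d" using G1 p fine1 by (auto simp: case_prod_unfold)
    finally show ?thesis using sumlr by simp
  qed
  have "(\<Sum>k<n. norm (\<phi> (r k) - \<phi> (l k))) < e/2"
    using H[unfolded ACP_def, rule_format, of n l r] C1 C2 C3 by blast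
  moreover have "(\<Sum>k<n. norm (\<phi> (r k) - \<phi> (l k))) = (\<Sum>xK\<in>pN'. \<bar>\<Delta> xK\<bar>)"
  proof -
    have "(\<Sum>xK\<in>pN'. \<bar>\<Delta> xK\<bar>) = (\<Sum>k\<in>{0..<n}. \<bar>\<Delta> (h k)\<bar>)"
      using sum.reindex_bij_betw[OF h, of "\<lambda>xK. \<bar>\<Delta> xK\<bar>"] by (simp add: n_def)
    also have "\<dots> = (\<Sum>k<n. norm (\<phi> (r k) - \<phi> (l k)))"
      by (intro sum.cong) (auto simp: atLeast0LessThan \<Delta>_def l_def r_def case_prod_unfold)
    finally show ?thesis by simp
  qed
  ultimately have "(\<Sum>xK\<in>pN. \<Delta> xK) < e/2" using NN by linarith
  then show "\<phi> b \<le> \<phi> a + e" using tele split S by linarith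
qed

lemma countable_isolated:
  fixes P :: "real set"
  assumes iso: "\<And>t. t \<in> P \<Longrightarrow> \<exists>e>0. \<forall>s\<in>P. \<bar>s - t\<bar> < e \<longrightarrow> s = t"
  shows "countable P"
proof -
  have ex: "\<exists>q::rat \<times> rat. \<exists>e>0. of_rat (fst q) < t \<and> t < of_rat (snd q) \<and> t - e < of_rat (fst q) \<and> of_rat (snd q) < t + e \<and>
              (\<forall>s\<in>P. \<bar>s - t\<bar> < e \<longrightarrow> s = t)" if tP: "t \<in> P" for t
  proof -
    obtain e where e: "e > 0" "\<forall>s\<in>P. \<bar>s - t\<bar> < e \<longrightarrow> s = t" using iso[OF tP] by blast
    obtain q1 where q1: "t - e < of_rat q1" "of_rat q1 < t" using of_rat_dense[of "t - e" t] e by auto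
    obtain q2 where q2: "t < of_rat q2" "of_rat q2 < t + e" using of_rat_dense[of t "t + e"] e by auto
    show ?thesis using e q1 q2 by (intro exI[of _ "(q1, q2)"] exI[of _ e]) auto
  qed
  define F where "F t = (SOME q::rat \<times> rat. \<exists>e>0. of_rat (fst q) < t \<and> t < of_rat (snd q) \<and> t - e < of_rat (fst q) \<and> of_rat (snd q) < t + e \<and>
              (\<forall>s\<in>P. \<bar>s - t\<bar> < e \<longrightarrow> s = t))" for t
  have F: "\<exists>e>0. of_rat (fst (F t)) < t \<and> t < of_rat (snd (F t)) \<and> t - e < of_rat (fst (F t)) \<and> of_rat (snd (F t)) < t + e \<and>
              (\<forall>s\<in>P. \<bar>s - t\<bar> < e \<longrightarrow> s = t)" if "t \<in> P" for t
    unfolding F_def by (rule someI_ex[OF ex[OF that]])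
  have "inj_on F P"
  proof (rule inj_onI)
    fix t t' assume t: "t \<in> P" and t': "t' \<in> P" and eq: "F t = F t'"
    obtain e where e: "e > 0" "of_rat (fst (F t)) < t" "t < of_rat (snd (F t))" "t - e < of_rat (fst (F t))"
        "of_rat (snd (F t)) < t + e" "\<forall>s\<in>P. \<bar>s - t\<bar> < e \<longrightarrow> s = t" using F[OF t] by blast
    obtain e' where e': "e' > 0" "of_rat (fst (F t')) < t'" "t' < of_rat (snd (F t'))" "t' - e' < of_rat (fst (F t'))"
        "of_rat (snd (F t')) < t' + e'" "\<forall>s\<in>P. \<bar>s - t'\<bar> < e' \<longrightarrow> s = t'" using F[OF t'] by blast
    have f: "(of_rat (fst (F t')) :: real) = of_rat (fst (F t))" and g: "(of_rat (snd (F t')) :: real) = of_rat (snd (F t))"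
      using eq by simp_all
    have "t' - t < e" "t - t' < e" using e(2-5) e'(2,3) f g by linarith+
    then have "\<bar>t' - t\<bar> < e" by (simp add: abs_less_iff)
    then show "t = t'" using e(6) t' by auto
  qed
  then show ?thesis by (rule countableI')
qed

lemma deriv_nonzero_isolated:
  fixes \<phi> :: "real \<Rightarrow> real"
  assumes der: "(\<phi> has_real_derivative D) (at t)" and D: "D \<noteq> 0" and z: "\<phi> t = 0"
  shows "\<exists>e>0. \<forall>s. \<bar>s - t\<bar> < e \<longrightarrow> \<phi> s = 0 \<longrightarrow> s = t"
proof -
  have "(\<phi> has_derivative (\<lambda>h. D * h)) (at t within UNIV)"
    using der by (simp add: has_field_derivative_def)
  moreover have "\<bar>D\<bar>/2 > 0" using D by simp
  ultimately obtain e where e: "e > 0" and H: "\<forall>y\<in>UNIV. norm (y - t) < e \<longrightarrow>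
      norm (\<phi> y - \<phi> t - D * (y - t)) \<le> \<bar>D\<bar>/2 * norm (y - t)"
    unfolding has_derivative_within_alt by blast
  show ?thesis
  proof (intro exI[of _ e] conjI allI impI e)
    fix s assume s: "\<bar>s - t\<bar> < e" and ps: "\<phi> s = 0"
    have "\<bar>D * (s - t)\<bar> \<le> \<bar>D\<bar>/2 * \<bar>s - t\<bar>" using H s ps z by auto
    then have "\<bar>D\<bar> * \<bar>s - t\<bar> \<le> \<bar>D\<bar>/2 * \<bar>s - t\<bar>" by (simp add: abs_mult)
    then have "\<bar>D\<bar>/2 * \<bar>s - t\<bar> \<le> \<bar>D\<bar>/2 * 0" by linarith
    then have "\<bar>s - t\<bar> \<le> 0" using \<open>\<bar>D\<bar>/2 > 0\<close> by (simp only: mult_le_cancel_left_pos)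
    then show "s = t" by simp
  qed
qed

lemma abs_deriv0:
  fixes \<phi> :: "real \<Rightarrow> real"
  assumes der: "(\<phi> has_real_derivative 0) (at t)" and z: "\<phi> t = 0"
  shows "((\<lambda>s. \<bar>\<phi> s\<bar>) has_real_derivative 0) (at t)"
proof -
  have d: "(\<phi> has_derivative (\<lambda>h. 0 * h)) (at t within UNIV)"
    using der by (simp only: has_field_derivative_def)
  have "((\<lambda>s. \<bar>\<phi> s\<bar>) has_derivative (\<lambda>h. 0 * h)) (at t within UNIV)"
    unfolding has_derivative_within_alt
  proof (intro conjI allI impI)
    show "bounded_linear (\<lambda>h::real. 0 * h)" by simp
    fix e :: real assume e: "e > 0"
    then obtain d where d0: "d > 0" and H: "\<forall>y\<in>UNIV. norm (y - t) < d \<longrightarrow>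
      norm (\<phi> y - \<phi> t - 0 * (y - t)) \<le> e * norm (y - t)"
      using d unfolding has_derivative_within_alt by blast
    show "\<exists>d>0. \<forall>y\<in>UNIV. norm (y - t) < d \<longrightarrow> norm (\<bar>\<phi> y\<bar> - \<bar>\<phi> t\<bar> - 0 * (y - t)) \<le> e * norm (y - t)"
      using d0 H z by (intro exI[of _ d]) auto
  qed
  then show ?thesis by (simp only: has_field_derivative_def)
qed

lemma min2_deriv:
  fixes f1 f2 :: "real \<Rightarrow> real"
  assumes d1: "(f1 has_real_derivative D1) (at t)" and d2: "(f2 has_real_derivative D2) (at t)"
    and tie: "f1 t = f2 t \<Longrightarrow> D1 = D2"
  shows "((\<lambda>s. min (f1 s) (f2 s)) has_real_derivative (if f1 t \<le> f2 t then D1 else D2)) (at t)"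
proof -
  have c: "((\<lambda>s. f2 s - f1 s) \<longlongrightarrow> f2 t - f1 t) (at t)"
    using DERIV_isCont[OF d1] DERIV_isCont[OF d2] unfolding isCont_def by (intro tendsto_diff)
  consider "f1 t < f2 t" | "f1 t > f2 t" | "f1 t = f2 t" by linarith
  then show ?thesis
  proof cases
    case 1
    then have "eventually (\<lambda>s. f2 s - f1 s > 0) (at t)" using c by (intro order_tendstoD(1)) auto
    then have ev: "eventually (\<lambda>s. f1 s = min (f1 s) (f2 s)) (at t)" by eventually_elim auto
    have "((\<lambda>s. min (f1 s) (f2 s)) has_real_derivative D1) (at t)"
      using has_field_derivative_cong_eventually[OF ev] d1 1 by simp
    then show ?thesis using 1 by simp
  next
    case 2
    then have "eventually (\<lambda>s. f2 s - f1 s < 0) (at t)" using c by (intro order_tendstoD(2)) auto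
    then have ev: "eventually (\<lambda>s. f2 s = min (f1 s) (f2 s)) (at t)" by eventually_elim auto
    have "((\<lambda>s. min (f1 s) (f2 s)) has_real_derivative D2) (at t)"
      using has_field_derivative_cong_eventually[OF ev] d2 2 by simp
    then show ?thesis using 2 by simp
  next
    case 3
    then have DD: "D1 = D2" by (rule tie)
    have da: "((\<lambda>s. f1 s - f2 s) has_real_derivative 0) (at t)"
      using DERIV_diff[OF d1 d2] DD by simp
    have dabs: "((\<lambda>s. \<bar>f1 s - f2 s\<bar>) has_real_derivative 0) (at t)"
      by (rule abs_deriv0[OF da]) (use 3 in simp)
    have "((\<lambda>s. f1 s - (\<bar>f1 s - f2 s\<bar> + (f1 s - f2 s)) / 2) has_real_derivative D1 - (0 + (D1 - D2)) / 2) (at t)"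
      by (rule DERIV_diff[OF d1 DERIV_cdivide[OF DERIV_add[OF dabs DERIV_diff[OF d1 d2]]]])
    moreover have "(\<lambda>s. f1 s - (\<bar>f1 s - f2 s\<bar> + (f1 s - f2 s)) / 2) = (\<lambda>s. min (f1 s) (f2 s))"
    proof
      fix s
      show "f1 s - (\<bar>f1 s - f2 s\<bar> + (f1 s - f2 s)) / 2 = min (f1 s) (f2 s)"
        by (cases "f1 s \<le> f2 s") (simp_all add: abs_of_nonpos abs_of_pos field_simps)
    qed
    ultimately show ?thesis using 3 DD by simp
  qed
qed

lemma Min_deriv:
  fixes h :: "'j \<Rightarrow> real \<Rightarrow> real"
  assumes J: "finite J" "J \<noteq> {}"
    and der: "\<And>j. j \<in> J \<Longrightarrow> (h j has_real_derivative d j) (at t)"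
    and tie: "\<And>i j. i \<in> J \<Longrightarrow> j \<in> J \<Longrightarrow> h i t = h j t \<Longrightarrow> d i = d j"
  shows "\<exists>j\<in>J. h j t = Min ((\<lambda>j. h j t) ` J) \<and> ((\<lambda>s. Min ((\<lambda>j. h j s) ` J)) has_real_derivative d j) (at t)"
  using J der tie
proof (induction J rule: finite_ne_induct)
  case (singleton x)
  show ?case using singleton.prems(1)[of x] by simp
next
  case (insert x F)
  have "\<exists>j\<in>F. h j t = Min ((\<lambda>j. h j t) ` F) \<and> ((\<lambda>s. Min ((\<lambda>j. h j s) ` F)) has_real_derivative d j) (at t)"
  proof (rule insert.IH)
    fix j assume "j \<in> F"
    then show "(h j has_real_derivative d j) (at t)" using insert.prems(1) by simp
  next
    fix i j assume "i \<in> F" "j \<in> F" "h i t = h j t"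
    then show "d i = d j" using insert.prems(2)[of i j] by simp
  qed
  then obtain k where k: "k \<in> F" "h k t = Min ((\<lambda>j. h j t) ` F)"
      "((\<lambda>s. Min ((\<lambda>j. h j s) ` F)) has_real_derivative d k) (at t)"
    by blast
  have eq: "Min ((\<lambda>j. h j s) ` insert x F) = min (h x s) (Min ((\<lambda>j. h j s) ` F))" for s
    using insert.hyps(1,2) by (simp add: image_insert)
  have tie': "h x t = Min ((\<lambda>j. h j t) ` F) \<Longrightarrow> d x = d k"
    using insert.prems(2)[of x k] k(1,2) by simp
  have D: "((\<lambda>s. min (h x s) (Min ((\<lambda>j. h j s) ` F))) has_real_derivative
      (if h x t \<le> Min ((\<lambda>j. h j t) ` F) then d x else d k)) (at t)"
    by (rule min2_deriv[OF _ k(3) tie']) (use insert.prems(1)[of x] in simp)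
  show ?case
  proof (cases "h x t \<le> Min ((\<lambda>j. h j t) ` F)")
    case True
    have m: "Min ((\<lambda>j. h j t) ` insert x F) = h x t" using eq[of t] True by simp
    have "((\<lambda>s. Min ((\<lambda>j. h j s) ` insert x F)) has_real_derivative d x) (at t)"
      using D True unfolding eq by simp
    then show ?thesis using m by (intro bexI[of _ x]) simp_all
  next
    case False
    have m: "Min ((\<lambda>j. h j t) ` insert x F) = h k t" using eq[of t] False k(2) by simp
    have "((\<lambda>s. Min ((\<lambda>j. h j s) ` insert x F)) has_real_derivative d k) (at t)"
      using D False unfolding eq by simp
    then show ?thesis using m k(1) by (intro bexI[of _ k]) simp_all
  qed
qed

lemma deriv_normsq:
  fixes Z :: "real \<Rightarrow> 'a::real_inner"
  assumes dZ: "(Z has_vector_derivative Z') (at t)"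
  shows "((\<lambda>s. (norm (Z s - z))^2) has_real_derivative 2 * inner (Z t - z) Z') (at t)"
proof -
  have d1: "((\<lambda>s. Z s - z) has_derivative (\<lambda>h. h *\<^sub>R Z')) (at t)"
    using dZ unfolding has_vector_derivative_def by (intro derivative_eq_intros) auto
  have d2: "((\<lambda>s. inner (Z s - z) (Z s - z)) has_derivative
      (\<lambda>h. inner (Z t - z) (h *\<^sub>R Z') + inner (h *\<^sub>R Z') (Z t - z))) (at t)"
    by (rule has_derivative_inner[OF d1 d1])
  have d3: "((\<lambda>s. inner (Z s - z) (Z s - z)) has_derivative (\<lambda>h. (2 * inner (Z t - z) Z') * h)) (at t)"
    by (rule has_derivative_eq_rhs[OF d2]) (auto simp: fun_eq_iff inner_commute algebra_simps)
  show ?thesis unfolding has_field_derivative_def power2_norm_eq_inner by (rule d3)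
qed

lemma deriv_comp_f:
  fixes X :: "real \<Rightarrow> 'a::real_inner"
  assumes df: "(f has_derivative (\<lambda>h. inner G h)) (at (X t))" and dX: "(X has_vector_derivative X') (at t)"
  shows "((\<lambda>s. f (X s)) has_real_derivative inner G X') (at t)"
proof -
  have dX': "(X has_derivative (\<lambda>h. h *\<^sub>R X')) (at t)" using dX by (simp add: has_vector_derivative_def)
  have "((\<lambda>s. f (X s)) has_derivative (\<lambda>h. inner G (h *\<^sub>R X'))) (at t)"
    by (rule has_derivative_compose[OF dX' df])
  then have "((\<lambda>s. f (X s)) has_derivative (\<lambda>h. (inner G X') * h)) (at t)"
    by (rule has_derivative_eq_rhs) (auto simp: fun_eq_iff)
  then show ?thesis by (simp add: has_field_derivative_def)
qed

lemma Min_diff_le: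
  fixes a b :: "'j \<Rightarrow> real"
  assumes J: "finite J" "J \<noteq> {}" and H: "\<And>j. j \<in> J \<Longrightarrow> \<bar>a j - b j\<bar> \<le> c"
  shows "\<bar>Min (a ` J) - Min (b ` J)\<bar> \<le> c"
proof -
  have "Min (a ` J) \<in> a ` J" "Min (b ` J) \<in> b ` J" using J by simp_all
  then obtain ja jb where ja: "ja \<in> J" "Min (a ` J) = a ja" and jb: "jb \<in> J" "Min (b ` J) = b jb" by auto
  have 1: "Min (b ` J) \<le> b ja" using J ja by simp
  have 2: "Min (a ` J) \<le> a jb" using J jb by simp
  have 3: "\<bar>a ja - b ja\<bar> \<le> c" "\<bar>a jb - b jb\<bar> \<le> c" using H ja jb by auto
  show ?thesis unfolding abs_le_iff using 1 2 3 ja jb unfolding abs_le_iff by linarith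
qed

lemma exp_neg_lip:
  fixes l r :: real
  assumes "0 \<le> l" "l \<le> r"
  shows "\<bar>exp (- r) - exp (- l)\<bar> \<le> r - l"
proof -
  have "1 + (l - r) \<le> exp (l - r)" by (rule exp_ge_add_one_self)
  then have "exp (-l) * (1 + (l - r)) \<le> exp (-l) * exp (l - r)" by (intro mult_left_mono) auto
  also have "exp (-l) * exp (l - r) = exp (-r)" by (simp add: exp_add[symmetric])
  finally have "exp (-l) - exp (-r) \<le> exp (-l) * (r - l)" by (simp add: algebra_simps)
  also have "\<dots> \<le> 1 * (r - l)" using assms by (intro mult_right_mono) auto
  finally have "exp (-l) - exp (-r) \<le> r - l" by simp
  moreover have "exp (-r) \<le> exp (-l)" using assms by simp
  ultimately show ?thesis by simp
qed

lemma exp_lip: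
  fixes l r T :: real
  assumes "l \<le> r" "r \<le> T"
  shows "\<bar>exp r - exp l\<bar> \<le> exp T * (r - l)"
proof -
  have "1 + (l - r) \<le> exp (l - r)" by (rule exp_ge_add_one_self)
  then have "exp r * (1 + (l - r)) \<le> exp r * exp (l - r)" by (intro mult_left_mono) auto
  also have "exp r * exp (l - r) = exp l" by (simp add: exp_add[symmetric])
  finally have "exp r - exp l \<le> exp r * (r - l)" by (simp add: algebra_simps)
  also have "\<dots> \<le> exp T * (r - l)" using assms by (intro mult_right_mono) auto
  finally have "exp r - exp l \<le> exp T * (r - l)" .
  moreover have "exp l \<le> exp r" using assms by simp
  ultimately show ?thesis by simp
qed

lemma normsq_lip:
  fixes a b :: "'a::real_normed_vector"
  assumes "norm a \<le> R" "norm b \<le> R"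
  shows "\<bar>(norm a)^2 - (norm b)^2\<bar> \<le> 2 * R * norm (a - b)"
proof -
  have "\<bar>(norm a)^2 - (norm b)^2\<bar> = \<bar>norm a - norm b\<bar> * (norm a + norm b)"
  proof -
    have "(norm a)^2 - (norm b)^2 = (norm a - norm b) * (norm a + norm b)" by (simp add: power2_eq_square algebra_simps)
    then show ?thesis by (simp add: abs_mult)
  qed
  also have "\<dots> \<le> norm (a - b) * (2 * R)"
    using assms by (intro mult_mono norm_triangle_ineq3) auto
  finally show ?thesis by (simp add: algebra_simps)
qed

lemma f_lip:
  fixes f :: "'a::real_inner \<Rightarrow> real"
  assumes sc: "strongly_convex_grad f g mu" and mu: "mu \<ge> 0"
  shows "\<bar>f y - f x\<bar> \<le> max (norm (g x)) (norm (g y)) * norm (y - x)"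
proof -
  have 1: "f y \<ge> f x + inner (g x) (y - x) + mu / 2 * (norm (y - x))^2" using sc unfolding strongly_convex_grad_def by blast
  have 2: "f x \<ge> f y + inner (g y) (x - y) + mu / 2 * (norm (x - y))^2" using sc unfolding strongly_convex_grad_def by blast
  have n: "mu / 2 * (norm (y - x))^2 \<ge> 0" "mu / 2 * (norm (x - y))^2 \<ge> 0" using mu by auto
  have c1: "\<bar>inner (g x) (y - x)\<bar> \<le> norm (g x) * norm (y - x)" by (rule Cauchy_Schwarz_ineq2)
  have c2: "\<bar>inner (g y) (x - y)\<bar> \<le> norm (g y) * norm (y - x)"
    using Cauchy_Schwarz_ineq2[of "g y" "x - y"] by (simp add: norm_minus_commute)
  have m1: "norm (g x) * norm (y - x) \<le> max (norm (g x)) (norm (g y)) * norm (y - x)" by (intro mult_right_mono) auto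
  have m2: "norm (g y) * norm (y - x) \<le> max (norm (g x)) (norm (g y)) * norm (y - x)" by (intro mult_right_mono) auto
  show ?thesis unfolding abs_le_iff using 1 2 n c1 c2 m1 m2 unfolding abs_le_iff by linarith
qed

lemma key_identity:
  fixes X Z z :: "'a::real_inner"
  shows "(norm (z - X))^2 = (norm (Z - X))^2 - 2 * inner (Z - z) (Z - X) + (norm (Z - z))^2"
  by (simp add: power2_norm_eq_inner inner_simps inner_commute algebra_simps)

theorem mainTheorem6:
  fixes f :: "nat \<Rightarrow> real^'n \<Rightarrow> real"
    and g :: "nat \<Rightarrow> real^'n \<Rightarrow> real^'n"
    and L mu :: "nat \<Rightarrow> real"
    and m :: nat
    and \<mu> \<gamma>0 :: real
    and \<gamma> :: "real \<Rightarrow> real"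
    and x0 x1 :: "real^'n"
    and X Z :: "real \<Rightarrow> real^'n"
  assumes m: "m \<ge> 1"
    and deriv_f: "\<And>j x. j \<in> {1..m} \<Longrightarrow> (f j has_derivative (\<lambda>h. inner (g j x) h)) (at x)"
    and cont_g: "\<And>j. j \<in> {1..m} \<Longrightarrow> continuous_on UNIV (g j)"
    and lip_g: "\<And>j. j \<in> {1..m} \<Longrightarrow> lipschitz_on (L j) UNIV (g j)"
    and sconv: "\<And>j. j \<in> {1..m} \<Longrightarrow> strongly_convex_grad (f j) (g j) (mu j)"
    and mu_bounds: "\<And>j. j \<in> {1..m} \<Longrightarrow> 0 \<le> mu j \<and> mu j \<le> L j"
    and mu_def: "\<mu> = Min (mu ` {1..m})"
    and gamma0: "\<gamma>0 > 0"
    and gamma_def: "\<And>t. \<gamma> t = \<mu> + (\<gamma>0 - \<mu>) * exp (- t)"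
    and X_ac: "loc_abs_cont X" and Z_ac: "loc_abs_cont Z"
    and X0: "X 0 = x0" and Z0: "Z 0 = x0 + x1"
    and ode: "AE t in lborel. t > 0 \<longrightarrow>
        (\<exists>X' Z'. (X has_vector_derivative X') (at t) \<and> (Z has_vector_derivative Z') (at t) \<and>
           X' = Z t - X t \<and>
           \<gamma> t *\<^sub>R Z' \<in> (\<lambda>v. \<mu> *\<^sub>R (X t - Z t) - v) `
              argmin_set (\<lambda>v. inner (X t - Z t) v) (Cset g m (X t)))"
  shows "\<forall>z. (AE t in lborel. t > 0 \<longrightarrow>
            (\<exists>D. ((\<lambda>s. fmin f m (X s) z + \<gamma> s / 2 * (norm (Z s - z))^2) has_real_derivative D) (at t) \<and>
                 D \<le> - (fmin f m (X t) z + \<gamma> t / 2 * (norm (Z t - z))^2)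
                      - \<mu> / 2 * (norm (Z t - X t))^2))
         \<and> (\<forall>t>0. fmin f m (X t) z + \<gamma> t / 2 * (norm (Z t - z))^2
                  \<le> exp (- t) * (fmin f m x0 z + \<gamma>0 / 2 * (norm (x0 + x1 - z))^2))"
proof (intro allI)
  fix z :: "real^'n"
  have J: "finite {1..m}" "{1..m} \<noteq> {}" using m by auto
  have mu_le: "\<mu> \<le> mu j" if "j \<in> {1..m}" for j using that J unfolding mu_def by simp
  have mu_nn: "\<mu> \<ge> 0"
  proof -
    have "\<mu> \<in> mu ` {1..m}" unfolding mu_def using J by simp
    then show ?thesis using mu_bounds by auto
  qed
  have gfun: "\<gamma> = (\<lambda>t. \<mu> + (\<gamma>0 - \<mu>) * exp (- t))" using gamma_def by (simp add: fun_eq_iff)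
  have dgamma: "(\<gamma> has_real_derivative (\<mu> - \<gamma> t)) (at t)" for t
  proof -
    have "((\<lambda>t. \<mu> + (\<gamma>0 - \<mu>) * exp (- t)) has_real_derivative 0 + (\<gamma>0 - \<mu>) * (exp (- t) * (- 1))) (at t)"
      by (intro DERIV_add DERIV_const DERIV_cmult DERIV_chain2[OF DERIV_exp] DERIV_minus DERIV_ident)
    then show ?thesis unfolding gfun by (simp add: algebra_simps)
  qed
  define E where "E = (\<lambda>s. fmin f m (X s) z + \<gamma> s / 2 * (norm (Z s - z))^2)"
  define h where "h = (\<lambda>j s. f j (X s) - f j z)"
  have fminh: "(\<lambda>s. fmin f m (X s) z) = (\<lambda>s. Min ((\<lambda>j. h j s) ` {1..m}))" by (simp add: fmin_def h_def)
  define P where "P i j = {t. h i t = h j t \<and> (\<exists>D. D \<noteq> 0 \<and> ((\<lambda>s. h i s - h j s) has_real_derivative D) (at t))}" for i j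
  have cP: "countable (P i j)" for i j
  proof (rule countable_isolated)
    fix t assume "t \<in> P i j"
    then obtain D where D: "D \<noteq> 0" "((\<lambda>s. h i s - h j s) has_real_derivative D) (at t)" and z0: "h i t - h j t = 0"
      unfolding P_def by auto
    obtain e where e: "e > 0" "\<forall>s. \<bar>s - t\<bar> < e \<longrightarrow> h i s - h j s = 0 \<longrightarrow> s = t"
      using deriv_nonzero_isolated[OF D(2) D(1) z0] by blast
    show "\<exists>e>0. \<forall>s\<in>P i j. \<bar>s - t\<bar> < e \<longrightarrow> s = t" using e by (intro exI[of _ e]) (auto simp: P_def)
  qed
  define B where "B = (\<Union>i\<in>{1..m}. \<Union>j\<in>{1..m}. P i j)"
  have cB: "countable B" unfolding B_def using cP by (intro countable_UN) auto
  have AEB: "AE t in lborel. t \<notin> B" by (rule AE_I'[OF countable_imp_null_set_lborel[OF cB]]) auto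
  have part1: "AE t in lborel. t > 0 \<longrightarrow> (\<exists>D. (E has_real_derivative D) (at t) \<and> D \<le> - E t - \<mu> / 2 * (norm (Z t - X t))^2)"
    using ode AEB
  proof eventually_elim
    case (elim t)
    show ?case
    proof
      assume t0: "t > 0"
      obtain X' Z' v where dX: "(X has_vector_derivative X') (at t)" and dZ: "(Z has_vector_derivative Z') (at t)"
        and X'eq: "X' = Z t - X t" and vmin: "v \<in> argmin_set (\<lambda>v. inner (X t - Z t) v) (Cset g m (X t))"
        and Zeq: "\<gamma> t *\<^sub>R Z' = \<mu> *\<^sub>R (X t - Z t) - v"
        using elim(1) t0 by blast
      have tB: "t \<notin> B" using elim(2) .
      define d where "d j = inner (g j (X t)) X'" for j
      have dh: "(h j has_real_derivative d j) (at t)" if jm: "j \<in> {1..m}" for j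
      proof -
        have "((\<lambda>s. f j (X s)) has_real_derivative inner (g j (X t)) X') (at t)"
          by (rule deriv_comp_f[OF deriv_f[OF jm] dX])
        then have "((\<lambda>s. f j (X s) - f j z) has_real_derivative inner (g j (X t)) X' - 0) (at t)"
          by (intro DERIV_diff DERIV_const)
        then show ?thesis by (simp add: h_def d_def)
      qed
      have tie: "d i = d j" if ij: "i \<in> {1..m}" "j \<in> {1..m}" "h i t = h j t" for i j
      proof (rule ccontr)
        assume ne: "d i \<noteq> d j"
        have dd: "((\<lambda>s. h i s - h j s) has_real_derivative d i - d j) (at t)"
          by (intro DERIV_diff dh ij(1,2))
        have "d i - d j \<noteq> 0" using ne by simp
        then have "t \<in> P i j" using dd ij(3) unfolding P_def by blast
        then show False using tB ij(1,2) unfolding B_def by blast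
      qed
      have exj: "\<exists>j\<in>{1..m}. h j t = Min ((\<lambda>j. h j t) ` {1..m}) \<and> ((\<lambda>s. Min ((\<lambda>j. h j s) ` {1..m})) has_real_derivative d j) (at t)"
        by (rule Min_deriv[OF J dh tie])
      then obtain j0 where j0: "j0 \<in> {1..m}" "h j0 t = Min ((\<lambda>j. h j t) ` {1..m})"
        and dmin: "((\<lambda>s. Min ((\<lambda>j. h j s) ` {1..m})) has_real_derivative d j0) (at t)"
        by blast
      have dF: "((\<lambda>s. fmin f m (X s) z) has_real_derivative d j0) (at t)" unfolding fminh by (rule dmin)
      have dN: "((\<lambda>s. (norm (Z s - z))^2) has_real_derivative 2 * inner (Z t - z) Z') (at t)"
        by (rule deriv_normsq[OF dZ])
      have dG: "((\<lambda>s. \<gamma> s / 2) has_real_derivative (\<mu> - \<gamma> t) / 2) (at t)"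
        by (rule DERIV_cdivide[OF dgamma])
      define DE where "DE = d j0 + ((\<mu> - \<gamma> t) / 2 * (norm (Z t - z))^2 + \<gamma> t / 2 * (2 * inner (Z t - z) Z'))"
      have dE: "(E has_real_derivative DE) (at t)"
        using DERIV_add[OF dF DERIV_mult[OF dG dN]] unfolding E_def DE_def by (simp add: ac_simps)
      have gC: "g j (X t) \<in> Cset g m (X t)" if "j \<in> {1..m}" for j
        unfolding Cset_def using that by (intro hull_inc) auto
      have vC: "v \<in> Cset g m (X t)" and vle: "\<And>w. w \<in> Cset g m (X t) \<Longrightarrow> inner (X t - Z t) v \<le> inner (X t - Z t) w"
        using vmin unfolding argmin_set_def by auto
      define F where "F = fmin f m (X t) z"
      have Fle: "F \<le> f j (X t) - f j z" if "j \<in> {1..m}" for j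
        unfolding F_def fmin_def using that J by simp
      have a: "d j0 \<le> inner v (Z t - X t)"
      proof -
        have "inner (X t - Z t) v \<le> inner (X t - Z t) (g j0 (X t))" using vle[OF gC[OF j0(1)]] .
        moreover have "X t - Z t = - (Z t - X t)" by simp
        ultimately have "inner (Z t - X t) (g j0 (X t)) \<le> inner (Z t - X t) v" by (simp only: inner_minus_left neg_le_iff_le)
        then show ?thesis unfolding d_def X'eq by (simp add: inner_commute)
      qed
      define c where "c = - F - \<mu> / 2 * (norm (z - X t))^2"
      have b: "inner (z - X t) v \<le> c"
      proof -
        have "Cset g m (X t) \<subseteq> {w. inner (z - X t) w \<le> c}"
          unfolding Cset_def
        proof (rule hull_minimal)
          show "convex {w. inner (z - X t) w \<le> c}" by (rule convex_halfspace_le)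
          show "(\<lambda>j. g j (X t)) ` {1..m} \<subseteq> {w. inner (z - X t) w \<le> c}"
          proof
            fix w assume "w \<in> (\<lambda>j. g j (X t)) ` {1..m}"
            then obtain j where j: "j \<in> {1..m}" "w = g j (X t)" by auto
            have sc: "f j z \<ge> f j (X t) + inner (g j (X t)) (z - X t) + mu j / 2 * (norm (z - X t))^2"
              using sconv[OF j(1)] unfolding strongly_convex_grad_def by blast
            have "\<mu> / 2 * (norm (z - X t))^2 \<le> mu j / 2 * (norm (z - X t))^2"
              using mu_le[OF j(1)] by (intro mult_right_mono) auto
            then have "inner (z - X t) w \<le> c" using sc Fle[OF j(1)] j(2) unfolding c_def
              by (simp add: inner_commute)
            then show "w \<in> {w. inner (z - X t) w \<le> c}" by simp
          qed
        qed
        then show ?thesis using vC by blast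
      qed
      have q: "inner v (Z t - X t) - inner (Z t - z) v = inner (z - X t) v"
        by (simp add: inner_diff_left inner_diff_right inner_commute)
      have cc: "\<gamma> t / 2 * (2 * inner (Z t - z) Z') = \<mu> * inner (Z t - z) (X t - Z t) - inner (Z t - z) v"
      proof -
        have "\<gamma> t / 2 * (2 * inner (Z t - z) Z') = inner (Z t - z) (\<gamma> t *\<^sub>R Z')" by simp
        also have "\<dots> = \<mu> * inner (Z t - z) (X t - Z t) - inner (Z t - z) v"
          unfolding Zeq by (simp add: inner_diff_right)
        finally show ?thesis .
      qed
      have p: "inner (Z t - z) (X t - Z t) = - inner (Z t - z) (Z t - X t)"
        by (simp add: inner_diff_right)
      have key: "\<mu> / 2 * (norm (z - X t))^2 = \<mu> / 2 * (norm (Z t - X t))^2 - \<mu> * inner (Z t - z) (Z t - X t) + \<mu> / 2 * (norm (Z t - z))^2"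
        unfolding key_identity[of z "X t" "Z t"] by (simp add: algebra_simps)
      have split: "(\<mu> - \<gamma> t) / 2 * (norm (Z t - z))^2 = \<mu> / 2 * (norm (Z t - z))^2 - \<gamma> t / 2 * (norm (Z t - z))^2"
        by (simp add: field_simps)
      have Et: "E t = F + \<gamma> t / 2 * (norm (Z t - z))^2" unfolding E_def F_def by simp
      have mp: "\<mu> * inner (Z t - z) (X t - Z t) = - (\<mu> * inner (Z t - z) (Z t - X t))" unfolding p by simp
      have lin: "\<And>dj q1 q2 q3 F A G M P B C S H DE::real. dj \<le> q1 \<Longrightarrow> q1 - q2 = q3 \<Longrightarrow> q3 \<le> - F - A \<Longrightarrow> G = M - q2 \<Longrightarrow>
          M = - P \<Longrightarrow> A = B - P + C \<Longrightarrow> S = C - H \<Longrightarrow> DE = dj + (S + G) \<Longrightarrow> DE \<le> - (F + H) - B"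
        by linarith
      have "DE \<le> - (F + \<gamma> t / 2 * (norm (Z t - z))^2) - \<mu> / 2 * (norm (Z t - X t))^2"
        by (rule lin[OF a q b[unfolded c_def] cc mp key split DE_def])
      then have "DE \<le> - E t - \<mu> / 2 * (norm (Z t - X t))^2" unfolding Et .
      then show "\<exists>D. (E has_real_derivative D) (at t) \<and> D \<le> - E t - \<mu> / 2 * (norm (Z t - X t))^2"
        using dE by blast
    qed
  qed
  show "(AE t in lborel. t > 0 \<longrightarrow>
            (\<exists>D. ((\<lambda>s. fmin f m (X s) z + \<gamma> s / 2 * (norm (Z s - z))^2) has_real_derivative D) (at t) \<and>
                 D \<le> - (fmin f m (X t) z + \<gamma> t / 2 * (norm (Z t - z))^2)
                      - \<mu> / 2 * (norm (Z t - X t))^2))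
         \<and> (\<forall>t>0. fmin f m (X t) z + \<gamma> t / 2 * (norm (Z t - z))^2
                  \<le> exp (- t) * (fmin f m x0 z + \<gamma>0 / 2 * (norm (x0 + x1 - z))^2))"
  proof
    show "AE t in lborel. t > 0 \<longrightarrow>
            (\<exists>D. ((\<lambda>s. fmin f m (X s) z + \<gamma> s / 2 * (norm (Z s - z))^2) has_real_derivative D) (at t) \<and>
                 D \<le> - (fmin f m (X t) z + \<gamma> t / 2 * (norm (Z t - z))^2)
                      - \<mu> / 2 * (norm (Z t - X t))^2)"
      using part1 unfolding E_def .
    show "\<forall>t>0. fmin f m (X t) z + \<gamma> t / 2 * (norm (Z t - z))^2
                  \<le> exp (- t) * (fmin f m x0 z + \<gamma>0 / 2 * (norm (x0 + x1 - z))^2)"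
    proof (intro allI impI)
      fix t :: real assume t0: "t > 0"
      have Xac: "abs_cont_on 0 t X" using X_ac t0 unfolding loc_abs_cont_def by simp
      have Zac: "abs_cont_on 0 t Z" using Z_ac t0 unfolding loc_abs_cont_def by simp
      obtain RX where RX: "RX \<ge> 0" "\<And>s. s \<in> {0..t} \<Longrightarrow> norm (X s) \<le> RX" using ac_bounded[OF Xac] by blast
      obtain RZ where RZ: "RZ \<ge> 0" "\<And>s. s \<in> {0..t} \<Longrightarrow> norm (Z s) \<le> RZ" using ac_bounded[OF Zac] by blast
      define K where "K = (\<Sum>j\<in>{1..m}. norm (g j 0) + L j * RX)"
      have Lnn: "L j \<ge> 0" if "j \<in> {1..m}" for j using mu_bounds[OF that] by linarith
      have gb: "norm (g j x) \<le> norm (g j 0) + L j * RX" if j: "j \<in> {1..m}" and x: "norm x \<le> RX" for j x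
      proof -
        have "dist (g j x) (g j 0) \<le> L j * dist x 0" by (rule lipschitz_onD[OF lip_g[OF j]]) auto
        then have "norm (g j x - g j 0) \<le> L j * norm x" by (simp add: dist_norm)
        moreover have "norm (g j x) - norm (g j 0) \<le> norm (g j x - g j 0)" by (rule norm_triangle_ineq2)
        moreover have "L j * norm x \<le> L j * RX" using Lnn[OF j] x by (intro mult_left_mono) auto
        ultimately show ?thesis by linarith
      qed
      have termnn: "norm (g j 0) + L j * RX \<ge> 0" if "j \<in> {1..m}" for j
        using Lnn[OF that] RX(1) by simp
      have gK: "norm (g j 0) + L j * RX \<le> K" if j: "j \<in> {1..m}" for j
        unfolding K_def using J(1) j termnn by (intro member_le_sum) auto
      have Kn: "K \<ge> 0" unfolding K_def using termnn by (intro sum_nonneg) auto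
      have fK: "\<bar>f j y - f j x\<bar> \<le> K * norm (y - x)" if j: "j \<in> {1..m}" and x: "norm x \<le> RX" and y: "norm y \<le> RX" for j x y
      proof -
        have "\<bar>f j y - f j x\<bar> \<le> max (norm (g j x)) (norm (g j y)) * norm (y - x)"
          using f_lip[OF sconv[OF j]] mu_bounds[OF j] by blast
        also have "\<dots> \<le> K * norm (y - x)"
          using gb[OF j x] gb[OF j y] gK[OF j] by (intro mult_right_mono) auto
        finally show ?thesis .
      qed
      have acF: "abs_cont_on 0 t (\<lambda>s. fmin f m (X s) z)"
      proof (rule ac_dom[OF Xac Kn])
        fix l r assume lr: "0 \<le> l" "l \<le> r" "r \<le> t"
        have "\<bar>Min ((\<lambda>j. f j (X r) - f j z) ` {1..m}) - Min ((\<lambda>j. f j (X l) - f j z) ` {1..m})\<bar> \<le> K * norm (X r - X l)"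
        proof (rule Min_diff_le[OF J])
          fix j assume j: "j \<in> {1..m}"
          have "\<bar>f j (X r) - f j (X l)\<bar> \<le> K * norm (X r - X l)" using fK[OF j] RX(2) lr by auto
          then show "\<bar>f j (X r) - f j z - (f j (X l) - f j z)\<bar> \<le> K * norm (X r - X l)" by simp
        qed
        then show "norm (fmin f m (X r) z - fmin f m (X l) z) \<le> K * norm (X r - X l)"
          by (simp add: fmin_def)
      qed
      have acN: "abs_cont_on 0 t (\<lambda>s. (norm (Z s - z))^2)"
      proof (rule ac_dom[OF Zac, of "2 * (RZ + norm z)"])
        fix l r assume lr: "0 \<le> l" "l \<le> r" "r \<le> t"
        have b1: "norm (Z r - z) \<le> RZ + norm z" using RZ(2)[of r] lr norm_triangle_ineq4[of "Z r" z] by auto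
        have b2: "norm (Z l - z) \<le> RZ + norm z" using RZ(2)[of l] lr norm_triangle_ineq4[of "Z l" z] by auto
        have "\<bar>(norm (Z r - z))^2 - (norm (Z l - z))^2\<bar> \<le> 2 * (RZ + norm z) * norm ((Z r - z) - (Z l - z))"
          by (rule normsq_lip[OF b1 b2])
        then show "norm ((norm (Z r - z))^2 - (norm (Z l - z))^2) \<le> 2 * (RZ + norm z) * norm (Z r - Z l)"
          by simp
      qed (use RZ(1) in simp)
      have acG: "abs_cont_on 0 t (\<lambda>s. \<gamma> s / 2)"
      proof (rule ac_dom[OF ac_id, of "\<bar>\<gamma>0 - \<mu>\<bar> / 2"])
        fix l r assume lr: "0 \<le> l" "l \<le> r" "r \<le> t"
        have "\<gamma> r / 2 - \<gamma> l / 2 = (\<gamma>0 - \<mu>) / 2 * (exp (- r) - exp (- l))"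
          unfolding gamma_def by (simp add: field_simps)
        then have "\<bar>\<gamma> r / 2 - \<gamma> l / 2\<bar> = \<bar>(\<gamma>0 - \<mu>) / 2\<bar> * \<bar>exp (- r) - exp (- l)\<bar>" by (simp only: abs_mult)
        then have "\<bar>\<gamma> r / 2 - \<gamma> l / 2\<bar> = \<bar>\<gamma>0 - \<mu>\<bar> / 2 * \<bar>exp (- r) - exp (- l)\<bar>" by simp
        also have "\<dots> \<le> \<bar>\<gamma>0 - \<mu>\<bar> / 2 * (r - l)" using exp_neg_lip[OF lr(1,2)] by (intro mult_left_mono) auto
        finally show "norm (\<gamma> r / 2 - \<gamma> l / 2) \<le> \<bar>\<gamma>0 - \<mu>\<bar> / 2 * norm (r - l)" using lr by simp
      qed simp
      have acE: "abs_cont_on 0 t (\<lambda>s. exp s)"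
      proof (rule ac_dom[OF ac_id, of "exp t"])
        fix l r assume lr: "0 \<le> l" "l \<le> r" "r \<le> t"
        show "norm (exp r - exp l) \<le> exp t * norm (r - l)" using exp_lip[OF lr(2,3)] lr by simp
      qed simp
      have acPhi: "abs_cont_on 0 t (\<lambda>s. exp s * (fmin f m (X s) z + \<gamma> s / 2 * (norm (Z s - z))^2))"
        by (rule ac_mult[OF acE ac_add[OF acF ac_mult[OF acG acN]]])
      from part1 obtain N0 where N0: "{x \<in> space lborel. \<not> (x > 0 \<longrightarrow> (\<exists>D. (E has_real_derivative D) (at x) \<and> D \<le> - E x - \<mu> / 2 * (norm (Z x - X x))^2))} \<subseteq> N0"
        "emeasure lborel N0 = 0" "N0 \<in> sets lborel" by (rule AE_E)
      have "N0 \<in> null_sets lborel" using N0(2,3) by (simp add: null_sets_def)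
      then have negN0: "negligible N0" unfolding negligible_iff_null_sets by (rule null_sets_completionI)
      have mono: "(\<lambda>s. exp s * E s) t \<le> (\<lambda>s. exp s * E s) 0"
      proof (rule ac_mono_neg[of 0 t _ "insert 0 N0"])
        show "0 \<le> t" using t0 by simp
        show "abs_cont_on 0 t (\<lambda>s. exp s * E s)" using acPhi unfolding E_def by simp
        show "negligible (insert 0 N0)" using negN0 by simp
        fix s assume s: "s \<in> {0..t}" "s \<notin> insert 0 N0"
        then have s0: "s > 0" by auto
        have "\<exists>D. (E has_real_derivative D) (at s) \<and> D \<le> - E s - \<mu> / 2 * (norm (Z s - X s))^2"
          using N0(1) s s0 by auto
        then obtain D where dE: "(E has_real_derivative D) (at s)" and Dle: "D \<le> - E s - \<mu> / 2 * (norm (Z s - X s))^2" by blast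
        have d: "((\<lambda>s. exp s * E s) has_real_derivative exp s * E s + exp s * D) (at s)"
          using DERIV_mult[OF DERIV_exp dE] by (simp add: ac_simps)
        have "\<mu> / 2 * (norm (Z s - X s))^2 \<ge> 0" using mu_nn by simp
        then have "E s + D \<le> 0" using Dle by linarith
        then have "exp s * (E s + D) \<le> 0" by (simp add: mult_nonneg_nonpos)
        then have "exp s * E s + exp s * D \<le> 0" by (simp add: algebra_simps)
        then show "\<exists>D. D \<le> 0 \<and> ((\<lambda>s. exp s * E s) has_real_derivative D) (at s)" using d by blast
      qed
      have E0: "E 0 = fmin f m x0 z + \<gamma>0 / 2 * (norm (x0 + x1 - z))^2"
        unfolding E_def using X0 Z0 gamma_def[of 0] by simp
      have "exp t * E t \<le> E 0" using mono by simp
      then have "exp (- t) * (exp t * E t) \<le> exp (- t) * E 0" by (intro mult_left_mono) auto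
      moreover have "exp (- t) * (exp t * E t) = E t" by (simp add: exp_minus field_simps)
      ultimately have "E t \<le> exp (- t) * E 0" by simp
      then show "fmin f m (X t) z + \<gamma> t / 2 * (norm (Z t - z))^2
                  \<le> exp (- t) * (fmin f m x0 z + \<gamma>0 / 2 * (norm (x0 + x1 - z))^2)"
        unfolding E0 unfolding E_def by simp
    qed
  qed
qed

end
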